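(* Let $X$ be a type variable, $A$ and $G$ types of system $\mathcal F$, $O$ a type constant and $\alpha$ a term variable. Then $\alpha:O\vdash_{\mathcal F} T_A : A[G/X]\rightarrow A[G^o/X]$ and $\alpha:O\vdash_{\mathcal F} T'_A : A[G^o/X]\rightarrow A[G/X]$.
   Context: Types of system $\mathcal F$ are built from type variables and type constants (atomic, not quantifiable; $O$ is one) with $\rightarrow$, $\forall$; $A[G/X]$ is capture-avoiding substitution. Typing: (ax) $\Gamma \vdash x_i : A_i$ for $x_i:A_i\in\Gamma$; ($\rightarrow_i$) from $\Gamma, x:B \vdash t : C$ infer $\Gamma \vdash \lambda x t : B \rightarrow C$; ($\rightarrow_e$) from $\Gamma \vdash u : B\rightarrow C$, $\Gamma \vdash v : B$ infer $\Gamma \vdash (u)v : C$; ($\forall_i$) from $\Gamma \vdash t : A$, $Y$ not free in $\Gamma$, infer $\Gamma \vdash t : \forall Y A$; ($\forall_e$) from $\Gamma \vdash t : \forall Y A$ infer $\Gamma \vdash t : A[C/Y]$. For types $A,B$: $A\wedge B=\forall Z\{(A\rightarrow(B\rightarrow Z))\rightarrow Z\}$ ($Z$ not free in $A,B$), and $G^o$ denotes $O\rightarrow G\wedge O$. Let $\mathbf 1=\lambda x\lambda y\,x$. For a type $F$, the $\lambda$-terms $T_F,T'_F$ (depending on the fixed $X$ and $\alpha$; bound variables $x,y,\beta,g$ chosen distinct from $\alpha$) are defined by induction on $F$: if $X$ is not free in $F$, $T_F=T'_F=\lambda x\,x$; otherwise, if $F=X$, $T_F=\lambda x\lambda\beta\lambda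 g\,(g)x\alpha$ and $T'_F=\lambda x\,(x)\alpha\mathbf 1$; if $F=C\rightarrow D$, $T_F=\lambda x\lambda y\,(T_D)(x)(T'_C)y$ and $T'_F=\lambda x\lambda y\,(T'_D)(x)(T_C)y$; if $F=\forall Y B$, $T_F=\lambda x\,(T_B)x$ and $T'_F=\lambda x\,(T'_B)x$. *)

theory Defs
  imports Main
begin

text \<open>Type variables are de Bruijn indices; type constants are atomic names (not quantifiable).\<close>
datatype ty = TVar nat | TConst nat | Arr ty ty | All ty

fun liftT :: "nat \<Rightarrow> ty \<Rightarrow> ty" where
  "liftT k (TVar n) = (if n < k then TVar n else TVar (Suc n))"
| "liftT k (TConst c) = TConst c"
| "liftT k (Arr A B) = Arr (liftT k A) (liftT k B)"
| "liftT k (All A) = All (liftT (Suc k) A)"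

fun fvT :: "ty \<Rightarrow> nat set" where
  "fvT (TVar n) = {n}"
| "fvT (TConst c) = {}"
| "fvT (Arr A B) = fvT A \<union> fvT B"
| "fvT (All A) = (\<lambda>n. n - 1) ` (fvT A - {0})"

text \<open>Capture-avoiding substitution \<open>A[G/X]\<close> of \<open>G\<close> for the free type variable \<open>X\<close>;
  all other free variables are left unchanged (as in the named presentation).\<close>
fun substT :: "nat \<Rightarrow> ty \<Rightarrow> ty \<Rightarrow> ty" where
  "substT X G (TVar n) = (if n = X then G else TVar n)"
| "substT X G (TConst c) = TConst c"
| "substT X G (Arr A B) = Arr (substT X G A) (substT X G B)"
| "substT X G (All A) = All (substT (Suc X) (liftT 0 G) A)"

fun instT :: "nat \<Rightarrow> ty \<Rightarrow> ty \<Rightarrow> ty" where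
  "instT k C (TVar n) = (if n < k then TVar n else if n = k then C else TVar (n - 1))"
| "instT k C (TConst c) = TConst c"
| "instT k C (Arr A B) = Arr (instT k C A) (instT k C B)"
| "instT k C (All A) = All (instT (Suc k) (liftT 0 C) A)"

text \<open>\<open>A \<and> B = \<forall>Z ((A \<rightarrow> (B \<rightarrow> Z)) \<rightarrow> Z)\<close>, Z fresh (index 0).\<close>
definition conjT :: "ty \<Rightarrow> ty \<Rightarrow> ty" where
  "conjT A B = All (Arr (Arr (liftT 0 A) (Arr (liftT 0 B) (TVar 0))) (TVar 0))"

text \<open>\<open>G\<^sup>o = O \<rightarrow> G \<and> O\<close>, where O is the type constant named oc.\<close>
definition oT :: "nat \<Rightarrow> ty \<Rightarrow> ty" where
  "oT oc G = Arr (TConst oc) (conjT G (TConst oc))"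

datatype trm = Var nat | Lam nat trm | App trm trm

type_synonym ctx = "nat \<Rightarrow> ty option"

inductive typing :: "ctx \<Rightarrow> trm \<Rightarrow> ty \<Rightarrow> bool" where
  ax:   "\<Gamma> x = Some A \<Longrightarrow> typing \<Gamma> (Var x) A"
| arrI: "typing (\<Gamma>(x \<mapsto> B)) t C \<Longrightarrow> typing \<Gamma> (Lam x t) (Arr B C)"
| arrE: "typing \<Gamma> u (Arr B C) \<Longrightarrow> typing \<Gamma> v B \<Longrightarrow> typing \<Gamma> (App u v) C"
| allI: "typing (map_option (liftT 0) \<circ> \<Gamma>) t A \<Longrightarrow> typing \<Gamma> t (All A)"
| allE: "typing \<Gamma> t (All A) \<Longrightarrow> typing \<Gamma> t (instT 0 C A)"

text \<open>Bound variable names x, y, beta, g are chosen distinct from alpha (= a) and each other.\<close>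
definition vx :: "nat \<Rightarrow> nat" where "vx a = a + 1"
definition vy :: "nat \<Rightarrow> nat" where "vy a = a + 2"
definition vb :: "nat \<Rightarrow> nat" where "vb a = a + 3"
definition vg :: "nat \<Rightarrow> nat" where "vg a = a + 4"

definition idT :: "nat \<Rightarrow> trm" where "idT a = Lam (vx a) (Var (vx a))"

definition oneT :: "nat \<Rightarrow> trm" where "oneT a = Lam (vx a) (Lam (vy a) (Var (vx a)))"

fun TF :: "nat \<Rightarrow> nat \<Rightarrow> ty \<Rightarrow> trm" and TF' :: "nat \<Rightarrow> nat \<Rightarrow> ty \<Rightarrow> trm" where
  "TF X a (TVar n) = (if n = X then
      Lam (vx a) (Lam (vb a) (Lam (vg a) (App (App (Var (vg a)) (Var (vx a))) (Var a))))
    else idT a)"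
| "TF X a (TConst c) = idT a"
| "TF X a (Arr C D) = (if X \<notin> fvT (Arr C D) then idT a else
      Lam (vx a) (Lam (vy a) (App (TF X a D) (App (Var (vx a)) (App (TF' X a C) (Var (vy a)))))))"
| "TF X a (All B) = (if X \<notin> fvT (All B) then idT a else
      Lam (vx a) (App (TF (Suc X) a B) (Var (vx a))))"
| "TF' X a (TVar n) = (if n = X then
      Lam (vx a) (App (App (Var (vx a)) (Var a)) (oneT a))
    else idT a)"
| "TF' X a (TConst c) = idT a"
| "TF' X a (Arr C D) = (if X \<notin> fvT (Arr C D) then idT a else
      Lam (vx a) (Lam (vy a) (App (TF' X a D) (App (Var (vx a)) (App (TF X a C) (Var (vy a)))))))"
| "TF' X a (All B) = (if X \<notin> fvT (All B) then idT a else
      Lam (vx a) (App (TF' (Suc X) a B) (Var (vx a))))"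

end

theory Submission
  imports Defs
begin

lemma weaken: "typing \<Gamma> t A \<Longrightarrow> \<Gamma> \<subseteq>\<^sub>m \<Gamma>' \<Longrightarrow> typing \<Gamma>' t A"
proof (induction arbitrary: \<Gamma>' rule: typing.induct)
  case (ax \<Gamma> x A) then show ?case by (auto intro!: typing.ax simp: map_le_def dom_def)
next
  case (arrI \<Gamma> x B t C) then show ?case by (meson typing.arrI map_le_upd)
next
  case (arrE \<Gamma> u B C v) then show ?case by (meson typing.arrE)
next
  case (allI \<Gamma> t A)
  have "map_option (liftT 0) \<circ> \<Gamma> \<subseteq>\<^sub>m map_option (liftT 0) \<circ> \<Gamma>'"
    using allI.prems by (auto simp: map_le_def dom_def)
  then show ?case using allI.IH by (metis typing.allI comp_def)
next
  case (allE \<Gamma> t A C) then show ?case by (auto intro!: typing.allE)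
qed

lemma subst_nf: "X \<notin> fvT A \<Longrightarrow> substT X G A = A"
proof (induction A arbitrary: X G)
  case (All A)
  have "Suc X \<notin> fvT A"
  proof
    assume "Suc X \<in> fvT A"
    then have "X \<in> (\<lambda>n. n - 1) ` (fvT A - {0})" by (metis Diff_iff diff_Suc_1 image_eqI nat.distinct(1) singletonD)
    with All.prems show False by simp
  qed
  then show ?case using All.IH by simp
qed auto

lemma inst_lift: "instT k C (liftT k A) = A"
  by (induction A arbitrary: k C) auto

lemma inst_var_lift: "instT k (TVar k) (liftT (Suc k) A) = A"
  by (induction A arbitrary: k) auto

lemma lift_lift: "i \<le> k \<Longrightarrow> liftT (Suc k) (liftT i A) = liftT i (liftT k A)"
  by (induction A arbitrary: i k) auto

lemma lift_oT: "liftT 0 (oT oc G) = oT oc (liftT 0 G)"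
  by (simp add: oT_def conjT_def lift_lift)

lemma lift_ctx: "map_option (liftT 0) \<circ> (Map.empty(a \<mapsto> TConst oc)) = Map.empty(a \<mapsto> TConst oc)"
  by (rule ext) auto

lemma idT_ty: "typing \<Gamma> (idT a) (Arr A A)"
  unfolding idT_def by (auto intro!: typing.arrI typing.ax)

lemma main:
  "\<forall>X G. typing (Map.empty(a \<mapsto> TConst oc)) (TF X a A)
           (Arr (substT X G A) (substT X (oT oc G) A))
       \<and> typing (Map.empty(a \<mapsto> TConst oc)) (TF' X a A)
           (Arr (substT X (oT oc G) A) (substT X G A))"
proof (induction A)
  case (TVar n)
  show ?case
  proof (intro HOL.allI conjI)
    fix X G
    show "typing (Map.empty(a \<mapsto> TConst oc)) (TF X a (TVar n))
           (Arr (substT X G (TVar n)) (substT X (oT oc G) (TVar n)))"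
    proof (cases "n = X")
      case True
      then show ?thesis
        unfolding oT_def conjT_def
        apply (simp add: idT_ty)
        apply (rule typing.arrI, rule typing.arrI, rule typing.allI, rule typing.arrI)
        apply (rule typing.arrE[where B="TConst oc"])
         apply (rule typing.arrE[where B="liftT 0 G"])
          apply (rule typing.ax, simp add: vx_def vb_def vg_def)
         apply (rule typing.ax, simp add: vx_def vb_def vg_def)
        apply (rule typing.ax, simp add: vx_def vb_def vg_def)
        done
    qed (simp add: idT_ty)
  next
    fix X G
    show "typing (Map.empty(a \<mapsto> TConst oc)) (TF' X a (TVar n))
           (Arr (substT X (oT oc G) (TVar n)) (substT X G (TVar n)))"
    proof (cases "n = X")
      case True
      have h: "instT 0 G (Arr (Arr (liftT 0 G) (Arr (liftT 0 (TConst oc)) (TVar 0))) (TVar 0))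
              = Arr (Arr G (Arr (TConst oc) G)) G"
        by (simp add: inst_lift)
      show ?thesis
        using True
        apply (simp add: idT_ty)
        apply (rule typing.arrI)
        apply (rule typing.arrE[where B="Arr G (Arr (TConst oc) G)"])
         apply (subst h[symmetric])
         apply (rule typing.allE)
         apply (rule typing.arrE[where B="TConst oc"])
          apply (rule typing.ax, simp add: vx_def oT_def conjT_def)
         apply (rule typing.ax, simp add: vx_def)
        unfolding oneT_def
        apply (rule typing.arrI, rule typing.arrI)
        apply (rule typing.ax, simp add: vx_def vy_def)
        done
    qed (simp add: idT_ty)
  qed
next
  case (TConst c)
  then show ?case by (simp add: idT_ty)
next
  case (Arr C D)
  show ?case
  proof (intro HOL.allI conjI)
    fix X G
    let ?G = "Map.empty(a \<mapsto> TConst oc)"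
    show "typing ?G (TF X a (Arr C D))
           (Arr (substT X G (Arr C D)) (substT X (oT oc G) (Arr C D)))"
    proof (cases "X \<in> fvT (Arr C D)")
      case False then show ?thesis by (subst subst_nf[OF False])+ (simp add: idT_ty del: fvT.simps)
    next
      case True
      let ?H = "?G(vx a \<mapsto> Arr (substT X G C) (substT X G D), vy a \<mapsto> substT X (oT oc G) C)"
      have le: "?G \<subseteq>\<^sub>m ?H" by (auto simp: map_le_def vx_def vy_def)
      have d: "typing ?H (TF X a D) (Arr (substT X G D) (substT X (oT oc G) D))"
        using Arr.IH(2) le weaken by blast
      have c: "typing ?H (TF' X a C) (Arr (substT X (oT oc G) C) (substT X G C))"
        using Arr.IH(1) le weaken by blast
      show ?thesis using True
        apply simp
        apply (rule typing.arrI, rule typing.arrI)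
        apply (rule typing.arrE[OF d])
        apply (rule typing.arrE[where B="substT X G C"])
         apply (rule typing.ax, simp add: vx_def vy_def)
        apply (rule typing.arrE[OF c])
        apply (rule typing.ax, simp add: vx_def vy_def)
        done
    qed
  next
    fix X G
    let ?G = "Map.empty(a \<mapsto> TConst oc)"
    show "typing ?G (TF' X a (Arr C D))
           (Arr (substT X (oT oc G) (Arr C D)) (substT X G (Arr C D)))"
    proof (cases "X \<in> fvT (Arr C D)")
      case False then show ?thesis by (subst subst_nf[OF False])+ (simp add: idT_ty del: fvT.simps)
    next
      case True
      let ?H = "?G(vx a \<mapsto> Arr (substT X (oT oc G) C) (substT X (oT oc G) D), vy a \<mapsto> substT X G C)"
      have le: "?G \<subseteq>\<^sub>m ?H" by (auto simp: map_le_def vx_def vy_def)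
      have d: "typing ?H (TF' X a D) (Arr (substT X (oT oc G) D) (substT X G D))"
        using Arr.IH(2) le weaken by blast
      have c: "typing ?H (TF X a C) (Arr (substT X G C) (substT X (oT oc G) C))"
        using Arr.IH(1) le weaken by blast
      show ?thesis using True
        apply simp
        apply (rule typing.arrI, rule typing.arrI)
        apply (rule typing.arrE[OF d])
        apply (rule typing.arrE[where B="substT X (oT oc G) C"])
         apply (rule typing.ax, simp add: vx_def vy_def)
        apply (rule typing.arrE[OF c])
        apply (rule typing.ax, simp add: vx_def vy_def)
        done
    qed
  qed
next
  case (All B)
  show ?case
  proof (intro HOL.allI conjI)
    fix X G
    let ?G = "Map.empty(a \<mapsto> TConst oc)"
    show "typing ?G (TF X a (All B))
           (Arr (substT X G (All B)) (substT X (oT oc G) (All B)))"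
    proof (cases "X \<in> fvT (All B)")
      case False then show ?thesis by (subst subst_nf[OF False])+ (simp add: idT_ty del: fvT.simps)
    next
      case True
      let ?B1 = "substT (Suc X) (liftT 0 G) B"
      let ?B2 = "substT (Suc X) (liftT 0 (oT oc G)) B"
      let ?H = "?G(vx a \<mapsto> All ?B1)"
      have le: "?G \<subseteq>\<^sub>m map_option (liftT 0) \<circ> ?H" by (auto simp: map_le_def vx_def)
      have ih: "typing ?G (TF (Suc X) a B) (Arr ?B1 ?B2)"
        using All.IH[rule_format, of "Suc X" "liftT 0 G"] by (simp add: lift_oT)
      have b: "typing (map_option (liftT 0) \<circ> ?H) (TF (Suc X) a B) (Arr ?B1 ?B2)"
        using ih le weaken by blast
      have x: "typing (map_option (liftT 0) \<circ> ?H) (Var (vx a)) ?B1"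
      proof -
        have x0: "typing (map_option (liftT 0) \<circ> ?H) (Var (vx a)) (All (liftT (Suc 0) ?B1))"
          by (rule typing.ax) simp
        show ?thesis using typing.allE[OF x0, of "TVar 0"] by (simp only: inst_var_lift)
      qed
      show ?thesis using True
        apply simp
        apply (rule typing.arrI, rule typing.allI)
        apply (rule typing.arrE[OF b x])
        done
    qed
  next
    fix X G
    let ?G = "Map.empty(a \<mapsto> TConst oc)"
    show "typing ?G (TF' X a (All B))
           (Arr (substT X (oT oc G) (All B)) (substT X G (All B)))"
    proof (cases "X \<in> fvT (All B)")
      case False then show ?thesis by (subst subst_nf[OF False])+ (simp add: idT_ty del: fvT.simps)
    next
      case True
      let ?B1 = "substT (Suc X) (liftT 0 G) B"
      let ?B2 = "substT (Suc X) (liftT 0 (oT oc G)) B"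
      let ?H = "?G(vx a \<mapsto> All ?B2)"
      have le: "?G \<subseteq>\<^sub>m map_option (liftT 0) \<circ> ?H" by (auto simp: map_le_def vx_def)
      have ih: "typing ?G (TF' (Suc X) a B) (Arr ?B2 ?B1)"
        using All.IH[rule_format, of "Suc X" "liftT 0 G"] by (simp add: lift_oT)
      have b: "typing (map_option (liftT 0) \<circ> ?H) (TF' (Suc X) a B) (Arr ?B2 ?B1)"
        using ih le weaken by blast
      have x: "typing (map_option (liftT 0) \<circ> ?H) (Var (vx a)) ?B2"
      proof -
        have x0: "typing (map_option (liftT 0) \<circ> ?H) (Var (vx a)) (All (liftT (Suc 0) ?B2))"
          by (rule typing.ax) simp
        show ?thesis using typing.allE[OF x0, of "TVar 0"] by (simp only: inst_var_lift)
      qed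
      show ?thesis using True
        apply simp
        apply (rule typing.arrI, rule typing.allI)
        apply (rule typing.arrE[OF b x])
        done
    qed
  qed
qed

theorem lemma3p1:
  fixes X :: nat and A G :: ty and oc :: nat and a :: nat
  shows "typing (Map.empty(a \<mapsto> TConst oc)) (TF X a A)
           (Arr (substT X G A) (substT X (oT oc G) A))
       \<and> typing (Map.empty(a \<mapsto> TConst oc)) (TF' X a A)
           (Arr (substT X (oT oc G) A) (substT X G A))"
  using main by blast

end
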